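(* Let $q \equiv 5 \pmod{8}$ be a prime power. Then the cyclotomic tournament $CT_q$ is a nearly-doubly-regular tournament if and only if $q = s^2 + 4$ for some odd integer $s$.
   Context: A tournament is an orientation of a complete graph. A tournament with $n$ vertices is regular if $n$ is odd and every vertex has out-degree $(n-1)/2$. For even $n$, a tournament with $n$ vertices is near-regular if every vertex has out-degree $n/2$ or $n/2-1$. A regular tournament with $n$ vertices is nearly-doubly-regular if $n \equiv 1 \pmod 4$ and, for every vertex, both the sub-tournament induced by its out-neighbours and the sub-tournament induced by its in-neighbours are near-regular. Cyclotomic tournament: let $q$ be a prime power with $q \equiv 5 \pmod 8$ (so $q-1 = 4m$ with $m$ odd), let $g$ be a primitive element (generator of $\mathbb{F}_q^*$), let $C_0^{(4)}$ be the subgroup of index $4$ in $\mathbb{F}_q^*$ and $C_i^{(4)} = g^i C_0^{(4)}$. Put $D = C_0^{(4)} \cup C_1^{(4)}$; then $(D,-D)$ partitions $\mathbb{F}_q^*$. The cyclotomic tournament $CT_q$ has vertex set $\mathbb{F}_q$ and an arc from $x$ to $y$ if and only if $x - y \in D$. *)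

theory Defs
  imports "HOL-Library.Cardinality"
begin

definition tournament :: "('a \<Rightarrow> 'a \<Rightarrow> bool) \<Rightarrow> 'a set \<Rightarrow> bool" where
  "tournament A V \<longleftrightarrow> finite V \<and> (\<forall>x\<in>V. \<not> A x x) \<and>
     (\<forall>x\<in>V. \<forall>y\<in>V. x \<noteq> y \<longrightarrow> (A x y \<longleftrightarrow> \<not> A y x))"

definition out_nbrs :: "('a \<Rightarrow> 'a \<Rightarrow> bool) \<Rightarrow> 'a set \<Rightarrow> 'a \<Rightarrow> 'a set" where
  "out_nbrs A V x = {y \<in> V. A x y}"

definition in_nbrs :: "('a \<Rightarrow> 'a \<Rightarrow> bool) \<Rightarrow> 'a set \<Rightarrow> 'a \<Rightarrow> 'a set" where
  "in_nbrs A V x = {y \<in> V. A y x}"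

definition outdeg :: "('a \<Rightarrow> 'a \<Rightarrow> bool) \<Rightarrow> 'a set \<Rightarrow> 'a \<Rightarrow> nat" where
  "outdeg A V x = card (out_nbrs A V x)"

definition regular_tournament :: "('a \<Rightarrow> 'a \<Rightarrow> bool) \<Rightarrow> 'a set \<Rightarrow> bool" where
  "regular_tournament A V \<longleftrightarrow> tournament A V \<and> odd (card V) \<and>
     (\<forall>x\<in>V. outdeg A V x = (card V - 1) div 2)"

text \<open>Near-regular (even order): every out-degree is n/2 or n/2 - 1.
  Applied to a vertex subset, this is the sub-tournament induced on it.\<close>
definition near_regular :: "('a \<Rightarrow> 'a \<Rightarrow> bool) \<Rightarrow> 'a set \<Rightarrow> bool" where
  "near_regular A V \<longleftrightarrow> tournament A V \<and> even (card V) \<and>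
     (\<forall>x\<in>V. outdeg A V x = card V div 2 \<or> outdeg A V x = card V div 2 - 1)"

definition nearly_doubly_regular :: "('a \<Rightarrow> 'a \<Rightarrow> bool) \<Rightarrow> 'a set \<Rightarrow> bool" where
  "nearly_doubly_regular A V \<longleftrightarrow> regular_tournament A V \<and> card V mod 4 = 1 \<and>
     (\<forall>x\<in>V. near_regular A (out_nbrs A V x) \<and> near_regular A (in_nbrs A V x))"

definition primitive_element :: "'a::{finite,field} \<Rightarrow> bool" where
  "primitive_element g \<longleftrightarrow> g \<noteq> 0 \<and> (\<forall>x. x \<noteq> 0 \<longrightarrow> (\<exists>k::nat. x = g ^ k))"

definition cyc_C0 :: "'a::{finite,field} set" where
  "cyc_C0 = {x ^ 4 | x. x \<noteq> 0}"

definition cyc_class :: "'a::{finite,field} \<Rightarrow> nat \<Rightarrow> 'a set" where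
  "cyc_class g i = (\<lambda>c. g ^ i * c) ` cyc_C0"

definition cyc_D :: "'a::{finite,field} \<Rightarrow> 'a set" where
  "cyc_D g = cyc_class g 0 \<union> cyc_class g 1"

definition cyc_arc :: "'a::{finite,field} \<Rightarrow> 'a \<Rightarrow> 'a \<Rightarrow> bool" where
  "cyc_arc g x y \<longleftrightarrow> x - y \<in> cyc_D g"

end

theory Submission
  imports Defs Complex_Main "HOL-Number_Theory.Residues" "HOL-Computational_Algebra.Polynomial" "HOL-Library.Cardinality"
begin


lemma of_nat_mult_monom: "of_nat n * monom (c::'a::comm_semiring_1) k = monom (of_nat n * c) k"
  by (induct n) (simp_all add: distrib_right add_monom)

lemma X_plus_1_power:
  "(monom (1::'a::comm_semiring_1) 1 + 1) ^ N = (\<Sum>k\<le>N. monom (of_nat (N choose k)) k)"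
  by (subst binomial_ring) (simp add: monom_power of_nat_mult_monom)

lemma coeff_X_plus_1_power:
  "coeff ((monom (1::'a::comm_semiring_1) 1 + 1) ^ N) r = of_nat (N choose r)"
  unfolding X_plus_1_power coeff_sum coeff_monom
  by (cases "r \<le> N") (auto simp: binomial_eq_0)

lemma lucas_step:
  assumes pr: "prime CHAR('a::comm_ring_1)" and n0: "n0 < CHAR('a)" and r0: "r0 < CHAR('a)"
  shows "(of_nat ((n0 + CHAR('a) * n) choose (r0 + CHAR('a) * r)) :: 'a)
         = of_nat (n0 choose r0) * of_nat (n choose r)"
proof -
  define p where "p = CHAR('a)"
  define X where "X = (monom (1::'a) 1)"
  have prp: "prime CHAR('a poly)" using pr by simp
  have fr: "(X + 1) ^ p = X ^ p + 1"
    using freshmans_dream[OF prp, of p X 1] by (simp add: p_def)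
  have Xp: "(X ^ p + 1) ^ n = (\<Sum>j\<le>n. monom (of_nat (n choose j)) (p * j))"
    by (subst binomial_ring) (simp add: X_def monom_power of_nat_mult_monom mult.commute)
  have "(X + 1) ^ (n0 + p * n) = (X + 1) ^ n0 * ((X + 1) ^ p) ^ n"
    by (simp add: power_add power_mult)
  also have "\<dots> = (\<Sum>i\<le>n0. monom (of_nat (n0 choose i)) i) * (\<Sum>j\<le>n. monom (of_nat (n choose j)) (p * j))"
    unfolding fr Xp by (subst X_def, subst X_plus_1_power, rule refl)
  also have "\<dots> = (\<Sum>i\<le>n0. \<Sum>j\<le>n. monom (of_nat (n0 choose i) * of_nat (n choose j)) (i + p * j))"
    by (simp add: sum_distrib_left sum_distrib_right mult_monom sum.swap[of _ "{..n}"])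
  finally have eq: "(X + 1) ^ (n0 + p * n) = \<dots>" .
  have key: "i + p * j = r0 + p * r \<longleftrightarrow> i = r0 \<and> j = r" if "i \<le> n0" for i j
  proof
    assume h: "i + p * j = r0 + p * r"
    have "i < p" "r0 < p" using that n0 r0 by (auto simp: p_def)
    hence "(i + p * j) mod p = i" "(r0 + p * r) mod p = r0" "(i + p * j) div p = j" "(r0 + p * r) div p = r"
      by auto
    with h show "i = r0 \<and> j = r" by metis
  qed auto
  have "coeff ((X + 1) ^ (n0 + p * n)) (r0 + p * r) =
        (\<Sum>i\<le>n0. \<Sum>j\<le>n. if i = r0 \<and> j = r then of_nat (n0 choose i) * of_nat (n choose j) else 0)"
    unfolding eq coeff_sum coeff_monom
    by (intro sum.cong refl) (use key in auto)
  also have "\<dots> = of_nat (n0 choose r0) * of_nat (n choose r)"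
  proof (cases "r0 \<le> n0 \<and> r \<le> n")
    case True
    have "(\<Sum>j\<le>n. if i = r0 \<and> j = r then of_nat (n0 choose i) * of_nat (n choose j) else (0::'a))
       = (if i = r0 then of_nat (n0 choose r0) * of_nat (n choose r) else 0)" for i
      using True by (cases "i = r0") (simp_all add: sum.delta)
    then show ?thesis
      using True by (simp add: sum.delta)
  next
    case False
    then show ?thesis
      by (auto simp: binomial_eq_0 sum.If_cases)
  qed
  finally show ?thesis
    using coeff_X_plus_1_power[where 'a='a, of "n0 + p * n" "r0 + p * r"] by (simp add: X_def p_def)
qed



definition addcl :: "'a::field set \<Rightarrow> bool" where
  "addcl S \<longleftrightarrow> 0 \<in> S \<and> (\<forall>x\<in>S. \<forall>y\<in>S. x + y \<in> S)"

context
  fixes dummy :: "'a::{finite,field}"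
begin

lemma CHAR_prime_ff: "prime CHAR('a::{finite,field})"
  by (rule prime_CHAR_semidom) (rule finite_imp_CHAR_pos, simp)

lemma addcl_ofnat: "addcl S \<Longrightarrow> x \<in> S \<Longrightarrow> of_nat n * x \<in> S"
  by (induct n) (auto simp: addcl_def distrib_right)

lemma addcl_neg:
  assumes "addcl (S :: 'a set)" "x \<in> S" shows "- x \<in> S"
proof -
  have p1: "CHAR('a) \<ge> 1" using CHAR_prime_ff prime_ge_1_nat by blast
  have "of_nat (CHAR('a) - 1) * x = (of_nat (CHAR('a)) - 1) * x"
    using p1 by (simp add: of_nat_diff)
  also have "\<dots> = - x" by simp
  finally show ?thesis using addcl_ofnat[OF assms, of "CHAR('a) - 1"] by simp
qed

lemma addcl_diff: "addcl (S :: 'a set) \<Longrightarrow> x \<in> S \<Longrightarrow> y \<in> S \<Longrightarrow> x - y \<in> S"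
  using addcl_neg[of S y] unfolding addcl_def by (metis diff_conv_add_uminus)

lemma addcl_ext:
  assumes S: "addcl (S :: 'a set)" and v: "v \<notin> S"
  defines "S' \<equiv> (\<lambda>(s, j). s + of_nat j * v) ` (S \<times> {..<CHAR('a)})"
  shows "addcl S'" "card S' = CHAR('a) * card S" "S \<subseteq> S'" "v \<in> S'"
proof -
  define p where "p = CHAR('a)"
  have pr: "prime p" using CHAR_prime_ff p_def by simp
  hence p1: "1 < p" using prime_gt_1_nat by blast
  show "S \<subseteq> S'"
  proof
    fix s assume "s \<in> S" thus "s \<in> S'" unfolding S'_def using p1
      by (intro image_eqI[of _ _ "(s, 0)"]) (auto simp: p_def)
  qed
  show "v \<in> S'" unfolding S'_def using p1 S
    by (intro image_eqI[of _ _ "(0, 1)"]) (auto simp: p_def addcl_def)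
  show "addcl S'"
    unfolding addcl_def
  proof (intro conjI ballI)
    show "0 \<in> S'" unfolding S'_def using p1 S
      by (intro image_eqI[of _ _ "(0, 0)"]) (auto simp: p_def addcl_def)
  next
    fix x y assume "x \<in> S'" "y \<in> S'"
    then obtain s j s' j' where xy: "x = s + of_nat j * v" "y = s' + of_nat j' * v"
      and ss: "s \<in> S" "s' \<in> S" and jj: "j < p" "j' < p"
      unfolding S'_def p_def by auto
    have "(of_nat (j + j') :: 'a) = of_nat ((j + j') mod p)"
      unfolding of_nat_eq_iff_cong_CHAR p_def by (simp add: cong_def)
    hence "x + y = (s + s') + of_nat ((j + j') mod p) * v"
      unfolding xy by (metis (no_types, lifting) add.assoc add.left_commute distrib_right of_nat_add)
    moreover have "s + s' \<in> S" using S ss by (simp add: addcl_def)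
    moreover have "(j + j') mod p < p" using p1 by simp
    ultimately show "x + y \<in> S'" unfolding S'_def p_def by force
  qed
  have inj: "inj_on (\<lambda>(s, j). s + of_nat j * v) (S \<times> {..<p})"
  proof (rule inj_onI, clarsimp)
    fix s j s' j'
    assume ss: "s \<in> S" "s' \<in> S" and jj: "j < p" "j' < p" and eq: "s + of_nat j * v = s' + of_nat j' * v"
    have main: "j = j'" if lt: "j < j'" and eq: "s + of_nat j * v = s' + of_nat j' * v"
      and ss: "s \<in> S" "s' \<in> S" and jj: "j' < p" for s s' j j'
    proof (rule ccontr)
      define d where "d = j' - j"
      have d: "0 < d" "d < p" using lt jj by (auto simp: d_def)
      have "of_nat d * v = s - s'"
        using eq lt by (simp add: d_def of_nat_diff algebra_simps)
      hence dv: "of_nat d * v \<in> S" using addcl_diff[OF S ss] by simp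
      have "\<not> p dvd d" using d by (auto dest: dvd_imp_le)
      hence "coprime d p" using prime_imp_coprime[OF pr] by (simp add: coprime_commute)
      then obtain k where k: "[d * k = Suc 0] (mod p)" using cong_solve_coprime_nat by blast
      have "(of_nat (d * k) :: 'a) = 1"
        using k unfolding p_def by (metis of_nat_1 One_nat_def of_nat_eq_iff_cong_CHAR)
      hence "v = of_nat k * (of_nat d * v)" by (simp add: algebra_simps flip: of_nat_mult)
      with addcl_ofnat[OF S dv, of k] have "v \<in> S" by simp
      with v show False by simp
    qed
    show "s = s' \<and> j = j'"
    proof -
      have "j = j'"
      proof (cases j j' rule: linorder_cases)
        case less then show ?thesis using main[OF less eq ss jj(2)] by simp
      next
        case greater then show ?thesis using main[OF greater eq[symmetric] ss(2,1) jj(1)] by simp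
      qed simp
      with eq show ?thesis by simp
    qed
  qed
  have "card S' = card (S \<times> {..<p})"
    unfolding S'_def p_def[symmetric] by (rule card_image[OF inj])
  thus "card S' = CHAR('a) * card S" by (simp add: p_def)
qed

lemma card_power_CHAR_aux:
  assumes "addcl (S :: 'a set)" "card S = CHAR('a) ^ i"
  shows "\<exists>k. CARD('a) = CHAR('a) ^ k"
  using assms
proof (induction "CARD('a) - card S" arbitrary: S i rule: less_induct)
  case less
  show ?case
  proof (cases "S = UNIV")
    case True then show ?thesis using less.prems by auto
  next
    case False
    then obtain v where v: "v \<notin> S" by auto
    define S' where "S' \<equiv> (\<lambda>(s, j). s + of_nat j * v) ` (S \<times> {..<CHAR('a)})"
    note ext = addcl_ext[OF less.prems(1) v, folded S'_def]
    have "card S < card S'"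
      using ext(3,4) v by (intro psubset_card_mono) auto
    moreover have "card S' \<le> CARD('a)" by (rule card_mono) auto
    ultimately have "CARD('a) - card S' < CARD('a) - card S" by linarith
    moreover have "card S' = CHAR('a) ^ Suc i" using ext(2) less.prems(2) by simp
    ultimately show ?thesis using less.hyps ext(1) by blast
  qed
qed

lemma card_power_CHAR: "\<exists>k. CARD('a) = CHAR('a) ^ k"
  by (rule card_power_CHAR_aux[of "{0}" 0]) (auto simp: addcl_def)

end


locale cyc =
  fixes g :: "'a::{finite,field}"
  assumes q8: "CARD('a) mod 8 = 5"
    and prim: "primitive_element g"
begin


definition n :: nat where "n = CARD('a) - 1"
definition m :: nat where "m = n div 4"

lemma q_ge: "CARD('a) \<ge> 5" using q8 by presburger
lemma n_eq: "n = 4 * m" using q8 unfolding n_def m_def by presburger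
lemma m_odd: "odd m" using q8 unfolding n_def m_def by presburger
lemma m_pos: "m > 0" using m_odd by (intro Nat.gr0I) auto
lemma q_eq: "CARD('a) = 4 * m + 1" using n_eq q_ge unfolding n_def by simp

lemma g_nz: "g \<noteq> 0" using prim by (simp add: primitive_element_def)

lemma fermat:
  fixes x :: 'a
  assumes x: "x \<noteq> 0"
  shows "x ^ n = 1"
proof -
  have fin: "finite (UNIV - {0::'a})" by simp
  have "(\<Prod>y\<in>UNIV-{0}. x * y) = (\<Prod>y\<in>UNIV-{0::'a}. y)"
    by (rule prod.reindex_bij_witness[of _ "\<lambda>y. y / x" "\<lambda>y. x * y"]) (use x in auto)
  moreover have "(\<Prod>y\<in>UNIV-{0}. x * y) = x ^ card (UNIV - {0::'a}) * (\<Prod>y\<in>UNIV-{0::'a}. y)"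
    by (simp add: prod.distrib)
  moreover have "card (UNIV - {0::'a}) = n" by (simp add: n_def card_Diff_subset)
  moreover have "(\<Prod>y\<in>UNIV-{0::'a}. y) \<noteq> 0" by (simp add: prod_zero_iff)
  ultimately show ?thesis by simp
qed

lemma g_pow_mod: "g ^ k = g ^ (k mod n)"
proof -
  have "g ^ k = g ^ (n * (k div n) + k mod n)" by simp
  also have "\<dots> = (g ^ n) ^ (k div n) * g ^ (k mod n)"
    by (simp only: power_add power_mult)
  finally have "g ^ k = (g ^ n) ^ (k div n) * g ^ (k mod n)" .
  thus ?thesis using fermat[OF g_nz] by simp
qed

lemma g_surj: "x \<noteq> 0 \<Longrightarrow> \<exists>k<n. g ^ k = x"
proof -
  assume "x \<noteq> 0"
  then obtain k :: nat where "x = g ^ k" using prim by (auto simp: primitive_element_def)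
  moreover have "k mod n < n" using n_eq m_pos by simp
  ultimately show ?thesis using g_pow_mod[of k] by (intro exI[of _ "k mod n"]) simp
qed

lemma g_image: "(\<lambda>k. g ^ k) ` {..<n} = UNIV - {0}"
proof (intro equalityI subsetI)
  fix x assume "x \<in> (\<lambda>k. g ^ k) ` {..<n}" thus "x \<in> UNIV - {0}" using g_nz by auto
next
  fix x :: 'a assume "x \<in> UNIV - {0}"
  then obtain k where "k < n" "g ^ k = x" using g_surj by blast
  thus "x \<in> (\<lambda>k. g ^ k) ` {..<n}" by blast
qed

lemma g_inj: "inj_on (\<lambda>k. g ^ k) {..<n}"
proof (rule eq_card_imp_inj_on)
  show "card ((\<lambda>k. g ^ k) ` {..<n}) = card {..<n}"
    unfolding g_image by (simp add: n_def card_Diff_subset)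
qed simp

lemma g_pow_eq_iff: "g ^ a = g ^ b \<longleftrightarrow> a mod n = b mod n"
proof -
  have nn: "n > 0" using n_eq m_pos by simp
  have "g ^ a = g ^ b \<longleftrightarrow> g ^ (a mod n) = g ^ (b mod n)" using g_pow_mod by metis
  also have "\<dots> \<longleftrightarrow> a mod n = b mod n"
    using inj_onD[OF g_inj, of "a mod n" "b mod n"] nn by auto
  finally show ?thesis .
qed

definition e :: "'a \<Rightarrow> nat" where "e x = (THE k. k < n \<and> g ^ k = x)"

lemma e_prop: assumes "x \<noteq> 0" shows "e x < n" "g ^ e x = x"
proof -
  obtain k where k: "k < n" "g ^ k = x" using g_surj[OF assms] by blast
  have "e x = k" unfolding e_def
    by (rule the_equality) (use k inj_onD[OF g_inj] in auto)
  thus "e x < n" "g ^ e x = x" using k by auto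
qed

lemma pow_eq_e: "x \<noteq> 0 \<Longrightarrow> g ^ k = x \<longleftrightarrow> k mod n = e x"
  using e_prop[of x] g_pow_eq_iff[of k "e x"] by auto

definition cls :: "'a \<Rightarrow> nat" where "cls x = e x mod 4"

lemma cls_lt: "cls x < 4" by (simp add: cls_def)

lemma cls_pow: assumes "x \<noteq> 0" "g ^ k = x" shows "cls x = k mod 4"
proof -
  have "k mod n = e x" using pow_eq_e assms by blast
  hence "k mod n mod 4 = e x mod 4" by simp
  moreover have "(4::nat) dvd n" by (simp add: n_eq)
  ultimately show ?thesis unfolding cls_def using mod_mod_cancel[of 4 n k] by simp
qed

lemma cls_mult: assumes "x \<noteq> 0" "y \<noteq> 0" shows "cls (x * y) = (cls x + cls y) mod 4"
proof -
  have "g ^ (e x + e y) = x * y" using e_prop assms by (simp add: power_add)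
  hence "cls (x * y) = (e x + e y) mod 4" using cls_pow[of "x*y" "e x + e y"] assms by simp
  thus ?thesis by (simp add: cls_def mod_add_eq)
qed

lemma cls_one: "cls 1 = 0" using cls_pow[of 1 0] by simp
lemma cls_g: "cls g = 1" using cls_pow[of g 1] g_nz by simp

definition iota :: 'a where "iota = g ^ m"

lemma g2m: "g ^ (2 * m) = -1"
proof -
  have "(g ^ (2 * m)) ^ 2 = g ^ n" unfolding n_eq power_mult[symmetric] by (simp add: mult.commute)
  hence "(g ^ (2 * m)) ^ 2 = 1" using fermat[OF g_nz] by simp
  hence "g ^ (2 * m) = 1 \<or> g ^ (2 * m) = -1" by (simp add: power2_eq_1_iff)
  moreover have "g ^ (2 * m) \<noteq> g ^ 0"
    unfolding g_pow_eq_iff using m_pos by (simp add: n_eq)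
  ultimately show ?thesis by simp
qed

lemma iota_sq: "iota ^ 2 = -1" using g2m unfolding iota_def power_mult[symmetric] by (simp add: mult.commute)
lemma iota4: "iota ^ 4 = 1"
proof -
  have "iota ^ 4 = (iota ^ 2) ^ 2" by (simp flip: power_mult)
  thus ?thesis using iota_sq by simp
qed

lemma cls_m1: "cls (-1) = 2"
proof -
  have "cls (-1) = (2 * m) mod 4" using cls_pow[of "-1" "2*m", OF _ g2m] by simp
  also have "\<dots> = 2"
  proof -
    obtain k where "m = 2 * k + 1" using m_odd oddE by blast
    thus ?thesis by presburger
  qed
  finally show ?thesis .
qed

lemma cls_neg: "x \<noteq> 0 \<Longrightarrow> cls (- x) = (cls x + 2) mod 4"
  using cls_mult[of "-1" x] cls_m1 by (simp add: add.commute)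

end


context cyc begin

lemma cls_cases: "cls x = 0 \<or> cls x = 1 \<or> cls x = 2 \<or> cls x = 3"
  using cls_lt[of x] by linarith

lemma cls_C0: "cyc_C0 = {y::'a. y \<noteq> 0 \<and> cls y = 0}"
proof (intro equalityI subsetI)
  fix y :: 'a assume "y \<in> cyc_C0"
  then obtain x where x: "x \<noteq> 0" "y = x ^ 4" unfolding cyc_C0_def by blast
  have "g ^ (4 * e x) = x ^ 4" using e_prop[OF x(1)] by (simp add: power_mult mult.commute)
  hence "cls (x ^ 4) = 0" using cls_pow[of "x^4" "4 * e x"] x by simp
  thus "y \<in> {y. y \<noteq> 0 \<and> cls y = 0}" using x by simp
next
  fix y :: 'a assume "y \<in> {y. y \<noteq> 0 \<and> cls y = 0}"
  hence y: "y \<noteq> 0" "cls y = 0" by auto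
  then obtain j where "e y = 4 * j" unfolding cls_def by blast
  hence "y = (g ^ j) ^ 4" using e_prop[OF y(1)] by (simp add: power_mult mult.commute)
  thus "y \<in> cyc_C0" unfolding cyc_C0_def using g_nz by auto
qed

lemma cls_C0': "cyc_class g 0 = {y::'a. y \<noteq> 0 \<and> cls y = 0}"
  unfolding cyc_class_def cls_C0[symmetric] by simp

lemma cls_C1: "cyc_class g 1 = {y::'a. y \<noteq> 0 \<and> cls y = 1}"
proof (intro equalityI subsetI)
  fix y assume "y \<in> cyc_class g 1"
  then obtain c where c: "c \<noteq> 0" "cls c = 0" "y = g * c" unfolding cyc_class_def cls_C0 by auto
  thus "y \<in> {y. y \<noteq> 0 \<and> cls y = 1}" using c cls_mult[of g c] g_nz cls_g by simp
next
  fix y :: 'a assume "y \<in> {y. y \<noteq> 0 \<and> cls y = 1}"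
  hence y: "y \<noteq> 0" "cls y = 1" by auto
  define c where "c = y / g"
  have c: "c \<noteq> 0" "y = g * c" using y g_nz by (auto simp: c_def)
  have "cls c = 0" using cls_mult[of g c] c g_nz cls_g y cls_cases[of c] by auto
  thus "y \<in> cyc_class g 1" unfolding cyc_class_def cls_C0 using c by auto
qed

lemma D_iff: "x \<in> cyc_D g \<longleftrightarrow> x \<noteq> 0 \<and> cls x \<le> 1"
  unfolding cyc_D_def cls_C1 cls_C0' by auto

lemma D_neg: "x \<noteq> 0 \<Longrightarrow> (- x \<in> cyc_D g) \<longleftrightarrow> x \<notin> cyc_D g"
  using cls_neg[of x] cls_cases[of x] unfolding D_iff by auto

lemma pow_m: "x \<noteq> 0 \<Longrightarrow> x ^ m = iota ^ cls x"
proof -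
  assume x: "x \<noteq> 0"
  have "x ^ m = iota ^ e x" using e_prop[OF x]
    by (metis iota_def mult.commute power_mult)
  also have "\<dots> = iota ^ (4 * (e x div 4) + cls x)" by (simp add: cls_def)
  also have "\<dots> = iota ^ cls x" by (simp add: power_add power_mult iota4)
  finally show ?thesis .
qed

end


lemma card_reindex_sub: "card {z::'a::ab_group_add. P (x - z)} = card {e. P e}"
proof -
  have "(\<lambda>e. x - e) ` {e. P e} = {z. P (x - z)}"
    by (auto simp: image_iff intro!: exI[of _ "x - _"])
  moreover have "inj (\<lambda>e::'a. x - e)" by (auto simp: inj_on_def)
  ultimately show ?thesis by (metis card_image inj_on_subset subset_UNIV)
qed

lemma card_reindex_add: "card {z::'a::ab_group_add. P (z - x)} = card {e. P e}"
proof -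
  have "(\<lambda>e. e + x) ` {e. P e} = {z. P (z - x)}"
    by (auto simp: image_iff intro!: exI[of _ "_ - x"])
  moreover have "inj (\<lambda>e::'a. e + x)" by (auto simp: inj_on_def)
  ultimately show ?thesis by (metis card_image inj_on_subset subset_UNIV)
qed

lemma tournament_sub: "tournament A V \<Longrightarrow> S \<subseteq> V \<Longrightarrow> tournament A S"
  unfolding tournament_def by (auto intro: finite_subset)

context cyc begin

abbreviation D where "D \<equiv> cyc_D g"

definition Nc :: "'a \<Rightarrow> nat" where "Nc d = card {e. e \<in> D \<and> e - d \<in> D}"
definition Mc :: "'a \<Rightarrow> nat" where "Mc d = card {e. e \<in> D \<and> d - e \<in> D}"

lemma zero_notin_D: "0 \<notin> D" by (simp add: D_iff)

lemma tourn: "tournament (cyc_arc g) UNIV"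
  unfolding tournament_def cyc_arc_def
proof (intro conjI ballI impI)
  fix x y :: 'a assume "x \<noteq> y"
  hence "x - y \<noteq> 0" by simp
  from D_neg[OF this] show "(x - y \<in> D) = (y - x \<notin> D)" by (simp add: minus_diff_eq)
qed (auto simp: zero_notin_D)

lemma card_D: "card D = 2 * m"
proof -
  have un: "UNIV - {0} = D \<union> uminus ` D"
  proof (intro equalityI subsetI)
    fix x :: 'a assume "x \<in> UNIV - {0}"
    hence x: "x \<noteq> 0" by simp
    show "x \<in> D \<union> uminus ` D"
    proof (cases "x \<in> D")
      case False
      hence "- x \<in> D" using D_neg[OF x] by simp
      thus ?thesis by (auto intro: image_eqI[of _ _ "- x"])
    qed simp
  qed (auto simp: zero_notin_D)
  have dis: "D \<inter> uminus ` D = {}"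
  proof (rule ccontr)
    assume "D \<inter> uminus ` D \<noteq> {}"
    then obtain y where y: "- y \<in> D" "y \<in> D" by auto
    hence "y \<noteq> 0" using zero_notin_D by auto
    with D_neg[of y] y show False by simp
  qed
  have "card (UNIV - {0::'a}) = card D + card (uminus ` D)"
    unfolding un by (rule card_Un_disjoint) (use dis in auto)
  also have "card (uminus ` D) = card D" by (rule card_image) (simp add: inj_on_def)
  finally have "n = 2 * card D" by (simp add: n_def card_Diff_subset)
  thus ?thesis using n_eq by simp
qed

lemma out_eq: "out_nbrs (cyc_arc g) UNIV x = {y. x - y \<in> D}"
  by (simp add: out_nbrs_def cyc_arc_def)
lemma in_eq: "in_nbrs (cyc_arc g) UNIV x = {y. y - x \<in> D}"
  by (simp add: in_nbrs_def cyc_arc_def)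

lemma card_out: "card (out_nbrs (cyc_arc g) UNIV x) = 2 * m"
  using card_reindex_sub[of "\<lambda>e. e \<in> D" x] card_D by (simp add: out_eq)
lemma card_in: "card (in_nbrs (cyc_arc g) UNIV x) = 2 * m"
  using card_reindex_add[of "\<lambda>e. e \<in> D" x] card_D by (simp add: in_eq)

lemma regular: "regular_tournament (cyc_arc g) UNIV"
  unfolding regular_tournament_def outdeg_def
  using tourn card_out q_eq by simp

lemma outdeg_out:
  assumes "w \<in> out_nbrs (cyc_arc g) UNIV x"
  shows "outdeg (cyc_arc g) (out_nbrs (cyc_arc g) UNIV x) w = Nc (x - w)"
proof -
  have "outdeg (cyc_arc g) (out_nbrs (cyc_arc g) UNIV x) w = card {z. x - z \<in> D \<and> w - z \<in> D}"
    by (simp add: outdeg_def out_nbrs_def cyc_arc_def)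
  also have "\<dots> = card {e. e \<in> D \<and> e - (x - w) \<in> D}"
    using card_reindex_sub[of "\<lambda>e. e \<in> D \<and> e - (x - w) \<in> D" x] by (simp add: algebra_simps)
  finally show ?thesis by (simp add: Nc_def)
qed

lemma outdeg_in:
  assumes "w \<in> in_nbrs (cyc_arc g) UNIV x"
  shows "outdeg (cyc_arc g) (in_nbrs (cyc_arc g) UNIV x) w = Mc (w - x)"
proof -
  have "outdeg (cyc_arc g) (in_nbrs (cyc_arc g) UNIV x) w = card {z. z - x \<in> D \<and> w - z \<in> D}"
    by (simp add: outdeg_def in_nbrs_def out_nbrs_def cyc_arc_def)
  also have "\<dots> = card {e. e \<in> D \<and> (w - x) - e \<in> D}"
    using card_reindex_add[of "\<lambda>e. e \<in> D \<and> (w - x) - e \<in> D" x] by (simp add: algebra_simps)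
  finally show ?thesis by (simp add: Mc_def)
qed

lemma N_plus_M: assumes d: "d \<in> D" shows "Nc d + Mc d = 2 * m - 1"
proof -
  have un: "{e. e \<in> D \<and> e - d \<in> D} \<union> {e. e \<in> D \<and> d - e \<in> D} = D - {d}"
  proof (intro equalityI subsetI)
    fix e assume "e \<in> D - {d}"
    hence "e - d \<noteq> 0" "e \<in> D" by auto
    thus "e \<in> {e. e \<in> D \<and> e - d \<in> D} \<union> {e. e \<in> D \<and> d - e \<in> D}"
      using D_neg[of "e - d"] by (auto simp: minus_diff_eq)
  qed (auto simp: zero_notin_D)
  have dis: "{e. e \<in> D \<and> e - d \<in> D} \<inter> {e. e \<in> D \<and> d - e \<in> D} = {}"
  proof (rule ccontr)
    assume "{e. e \<in> D \<and> e - d \<in> D} \<inter> {e. e \<in> D \<and> d - e \<in> D} \<noteq> {}"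
    then obtain e where y: "e - d \<in> D" "- (e - d) \<in> D" by auto
    hence "e - d \<noteq> 0" using zero_notin_D by auto
    with D_neg[of "e - d"] y show False by simp
  qed
  have "Nc d + Mc d = card (D - {d})"
    unfolding Nc_def Mc_def un[symmetric] by (rule card_Un_disjoint[symmetric]) (use dis in auto)
  also have "\<dots> = 2 * m - 1" using d card_D by simp
  finally show ?thesis .
qed

lemma NDR_iff_N: "nearly_doubly_regular (cyc_arc g) UNIV \<longleftrightarrow> (\<forall>d\<in>D. Nc d = m \<or> Nc d = m - 1)"
proof
  assume ndr: "nearly_doubly_regular (cyc_arc g) UNIV"
  show "\<forall>d\<in>D. Nc d = m \<or> Nc d = m - 1"
  proof
    fix d assume d: "d \<in> D"
    have w: "0 \<in> out_nbrs (cyc_arc g) UNIV d" using d by (simp add: out_eq)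
    have "near_regular (cyc_arc g) (out_nbrs (cyc_arc g) UNIV d)"
      using ndr unfolding nearly_doubly_regular_def by simp
    hence "outdeg (cyc_arc g) (out_nbrs (cyc_arc g) UNIV d) 0 = m \<or>
           outdeg (cyc_arc g) (out_nbrs (cyc_arc g) UNIV d) 0 = m - 1"
      unfolding near_regular_def card_out using w by simp
    thus "Nc d = m \<or> Nc d = m - 1" using outdeg_out[OF w] by simp
  qed
next
  assume H: "\<forall>d\<in>D. Nc d = m \<or> Nc d = m - 1"
  show "nearly_doubly_regular (cyc_arc g) UNIV"
    unfolding nearly_doubly_regular_def
  proof (intro conjI ballI)
    show "regular_tournament (cyc_arc g) UNIV" by (rule regular)
    show "CARD('a) mod 4 = 1" using q_eq by simp
  next
    fix x :: 'a
    show "near_regular (cyc_arc g) (out_nbrs (cyc_arc g) UNIV x)"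
      unfolding near_regular_def card_out
    proof (intro conjI ballI)
      show "tournament (cyc_arc g) (out_nbrs (cyc_arc g) UNIV x)"
        by (rule tournament_sub[OF tourn]) simp
    next
      fix w assume w: "w \<in> out_nbrs (cyc_arc g) UNIV x"
      hence "x - w \<in> D" by (simp add: out_eq)
      thus "outdeg (cyc_arc g) (out_nbrs (cyc_arc g) UNIV x) w = 2 * m div 2 \<or>
            outdeg (cyc_arc g) (out_nbrs (cyc_arc g) UNIV x) w = 2 * m div 2 - 1"
        using H outdeg_out[OF w] by simp
    qed simp
    show "near_regular (cyc_arc g) (in_nbrs (cyc_arc g) UNIV x)"
      unfolding near_regular_def card_in
    proof (intro conjI ballI)
      show "tournament (cyc_arc g) (in_nbrs (cyc_arc g) UNIV x)"
        by (rule tournament_sub[OF tourn]) simp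
    next
      fix w assume w: "w \<in> in_nbrs (cyc_arc g) UNIV x"
      hence d: "w - x \<in> D" by (simp add: in_eq)
      have "Nc (w - x) + Mc (w - x) = 2 * m - 1" by (rule N_plus_M[OF d])
      moreover have "Nc (w - x) = m \<or> Nc (w - x) = m - 1" using H d by simp
      ultimately have "Mc (w - x) = m \<or> Mc (w - x) = m - 1" using m_pos by linarith
      thus "outdeg (cyc_arc g) (in_nbrs (cyc_arc g) UNIV x) w = 2 * m div 2 \<or>
            outdeg (cyc_arc g) (in_nbrs (cyc_arc g) UNIV x) w = 2 * m div 2 - 1"
        using outdeg_in[OF w] by simp
    qed simp
  qed
qed

end


lemma i_pow_mod4: "\<i> ^ (k mod 4) = \<i> ^ k"
proof -
  have "\<i> ^ k = \<i> ^ (4 * (k div 4) + k mod 4)" by simp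
  also have "\<dots> = \<i> ^ (k mod 4)" by (simp only: power_add power_mult) simp
  finally show ?thesis by simp
qed

lemma cnj_i_pow: "cnj (\<i> ^ k) * \<i> ^ k = 1"
  by (simp flip: power_mult_distrib)

lemma neg_i_pow: "(- \<i>) ^ k * \<i> ^ k = 1"
proof -
  have "(- \<i>) ^ k * \<i> ^ k = (- \<i> * \<i>) ^ k" by (simp only: power_mult_distrib)
  thus ?thesis by simp
qed

lemma sum_shift: "(\<Sum>x\<in>UNIV. f (x + c)) = (\<Sum>x\<in>UNIV. f (x :: 'a::{finite,ab_group_add}))"
  by (rule sum.reindex_bij_witness[of _ "\<lambda>x. x - c" "\<lambda>x. x + c"]) auto

lemma sum_scale: "(c::'a::{finite,field}) \<noteq> 0 \<Longrightarrow> (\<Sum>x\<in>UNIV. f (c * x)) = (\<Sum>x\<in>UNIV. f x)"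
  by (rule sum.reindex_bij_witness[of _ "\<lambda>x. x / c" "\<lambda>x. c * x"]) auto

context cyc begin

definition chi :: "'a \<Rightarrow> complex" where "chi x = (if x = 0 then 0 else \<i> ^ cls x)"

lemma chi_0 [simp]: "chi 0 = 0" by (simp add: chi_def)

lemma chi_mult: "chi (x * y) = chi x * chi y"
proof (cases "x = 0 \<or> y = 0")
  case False
  hence "chi (x * y) = \<i> ^ ((cls x + cls y) mod 4)" by (simp add: chi_def cls_mult)
  also have "\<dots> = chi x * chi y" using False by (simp add: i_pow_mod4 chi_def power_add)
  finally show ?thesis .
qed (auto simp: chi_def)

lemma chi_1 [simp]: "chi 1 = 1" by (simp add: chi_def cls_one)
lemma chi_m1: "chi (-1) = -1" by (simp add: chi_def cls_m1)
lemma chi_g: "chi g = \<i>" using g_nz by (simp add: chi_def cls_g)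
lemma chi_neg: "chi (- x) = - chi x" using chi_mult[of "-1" x] chi_m1 by simp

lemma chi_nz: "x \<noteq> 0 \<Longrightarrow> chi x \<noteq> 0" by (simp add: chi_def)

lemma cnj_chi_mult: "cnj (chi x) * chi x = (if x = 0 then 0 else 1)"
  by (simp add: chi_def neg_i_pow)

lemma cnj_chi: "cnj (chi x) = chi (inverse x)"
proof (cases "x = 0")
  case False
  have "chi (inverse x) * chi x = 1" using False by (simp flip: chi_mult)
  moreover have "cnj (chi x) * chi x = 1" using False by (simp add: cnj_chi_mult)
  ultimately show ?thesis using chi_nz[OF False] by (metis mult_cancel_right)
qed simp

lemma sum_chi: "(\<Sum>x\<in>UNIV. chi x) = 0"
proof -
  have "(\<Sum>x\<in>UNIV. chi x) = (\<Sum>x\<in>UNIV. chi (g * x))" using sum_scale[OF g_nz, of chi] by simp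
  also have "\<dots> = \<i> * (\<Sum>x\<in>UNIV. chi x)" by (simp add: chi_mult chi_g sum_distrib_left)
  finally have "(1 - \<i>) * (\<Sum>x\<in>UNIV. chi x) = 0" by (simp add: algebra_simps)
  thus ?thesis by simp
qed

lemma sum_chi2: "(\<Sum>x\<in>UNIV. chi x ^ 2) = 0"
proof -
  have "(\<Sum>x\<in>UNIV. chi x ^ 2) = (\<Sum>x\<in>UNIV. chi (g * x) ^ 2)" using sum_scale[OF g_nz, of "\<lambda>x. chi x ^ 2"] by simp
  also have "\<dots> = - (\<Sum>x\<in>UNIV. chi x ^ 2)" by (simp add: chi_mult chi_g power_mult_distrib sum_negf)
  finally show ?thesis by simp
qed


lemma sum_chi_but1: "(\<Sum>x\<in>UNIV - {a}. chi x) = - chi a"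
  using sum_chi by (simp add: sum_diff1)

definition J :: complex where "J = (\<Sum>y\<in>UNIV. chi y * chi (1 - y))"

lemma K_eq: "(\<Sum>y\<in>UNIV. chi y * cnj (chi (1 - y))) = 1"
proof -
  have "(\<Sum>y\<in>UNIV. chi y * cnj (chi (1 - y))) = (\<Sum>y\<in>UNIV. chi (y / (1 - y)))"
    by (simp add: cnj_chi divide_inverse chi_mult)
  also have "\<dots> = (\<Sum>y\<in>UNIV - {1}. chi (y / (1 - y)))"
    by (simp add: sum_diff1)
  also have "\<dots> = (\<Sum>t\<in>UNIV - {-1}. chi t)"
  proof (rule sum.reindex_bij_witness[of _ "\<lambda>t. t / (1 + t)" "\<lambda>y. y / (1 - y)"])
    fix t :: 'a assume "t \<in> UNIV - {-1}"
    hence t: "1 + t \<noteq> 0" by (metis DiffD2 add.commute add_eq_0_iff2 insertI1)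
    show "t / (1 + t) / (1 - t / (1 + t)) = t" using t by (simp add: field_simps)
    show "t / (1 + t) \<in> UNIV - {1}" using t by (simp add: field_simps)
  next
    fix y :: 'a assume "y \<in> UNIV - {1}"
    hence y: "1 - y \<noteq> 0" by simp
    show "y / (1 - y) / (1 + y / (1 - y)) = y" using y by (simp add: field_simps)
    show "y / (1 - y) \<in> UNIV - {-1}" using y by (simp add: field_simps)
  qed simp
  also have "\<dots> = 1" by (simp add: sum_chi_but1 chi_m1)
  finally show ?thesis .
qed

end


context cyc begin

definition T :: "'a \<Rightarrow> complex" where "T u = (\<Sum>y\<in>UNIV - {0,1}. chi ((1 - u * y) / (1 - y)))"

lemma T_1: "T 1 = of_nat CARD('a) - 2"
proof -
  have "T 1 = (\<Sum>y\<in>UNIV - {0::'a,1}. 1)"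
    unfolding T_def by (rule sum.cong) auto
  hence "T 1 = of_nat (card (UNIV - {0::'a, 1}))" by simp
  also have "card (UNIV - {0::'a, 1}) = CARD('a) - 2" by (simp add: card_Diff_subset)
  also have "of_nat (CARD('a) - 2) = (of_nat CARD('a) - 2 :: complex)" using q_ge by (simp add: of_nat_diff)
  finally show ?thesis .
qed

lemma T_ne1: assumes u: "u \<noteq> 1" shows "T u = - 1 - chi u"
proof -
  have "T u = (\<Sum>w\<in>UNIV - {1, u}. chi w)"
    unfolding T_def
  proof (rule sum.reindex_bij_witness[of _ "\<lambda>w. (w - 1) / (w - u)" "\<lambda>y. (1 - u * y) / (1 - y)"])
    fix w :: 'a assume "w \<in> UNIV - {1, u}"
    hence w: "w \<noteq> 1" "w \<noteq> u" by auto
    have wu: "w - u \<noteq> 0" using w by simp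
    have u1: "1 - u \<noteq> 0" using u by simp
    have "(w - 1) / (w - u) \<noteq> 0" using w wu by simp
    moreover have "(w - 1) / (w - u) \<noteq> 1"
    proof
      assume "(w - 1) / (w - u) = 1"
      hence "w - 1 = w - u" using wu by (simp add: divide_eq_1_iff)
      thus False using u by simp
    qed
    ultimately show "(w - 1) / (w - u) \<in> UNIV - {0, 1}" by simp
    have "1 - (w - 1) / (w - u) = (1 - u) / (w - u)" using wu by (simp add: field_simps)
    moreover have "1 - u * ((w - 1) / (w - u)) = w * (1 - u) / (w - u)" using wu by (simp add: field_simps)
    ultimately show "(1 - u * ((w - 1) / (w - u))) / (1 - (w - 1) / (w - u)) = w"
      using wu u1 by simp
  next
    fix y :: 'a assume "y \<in> UNIV - {0, 1}"
    hence y: "y \<noteq> 0" "y \<noteq> 1" by auto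
    have y1: "1 - y \<noteq> 0" using y by simp
    have u1: "1 - u \<noteq> 0" using u by simp
    have a: "(1 - u * y) / (1 - y) - 1 = y * (1 - u) / (1 - y)" using y1 by (simp add: field_simps)
    have b: "(1 - u * y) / (1 - y) - u = (1 - u) / (1 - y)" using y1 by (simp add: field_simps)
    show "((1 - u * y) / (1 - y) - 1) / ((1 - u * y) / (1 - y) - u) = y"
      unfolding a b using y1 u1 by simp
    have "(1 - u * y) / (1 - y) - 1 \<noteq> 0" unfolding a using y y1 u1 by simp
    moreover have "(1 - u * y) / (1 - y) - u \<noteq> 0" unfolding b using y y1 u1 by simp
    ultimately show "(1 - u * y) / (1 - y) \<in> UNIV - {1, u}" by auto
  qed simp
  also have "\<dots> = - 1 - chi u"
  proof -
    have "(\<Sum>w\<in>UNIV - {1, u}. chi w) = (\<Sum>w\<in>UNIV - {1} - {u}. chi w)"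
      by (rule sum.cong) auto
    also have "\<dots> = (\<Sum>w\<in>UNIV - {1}. chi w) - chi u" using u by (simp add: sum_diff1)
    also have "\<dots> = - 1 - chi u" by (simp add: sum_chi_but1)
    finally show ?thesis .
  qed
  finally show ?thesis .
qed

lemma JJ: "J * cnj J = of_nat CARD('a)"
proof -
  have "J * cnj J = (\<Sum>x\<in>UNIV. \<Sum>y\<in>UNIV. chi x * chi (1 - x) * (chi (inverse y) * chi (inverse (1 - y))))"
    unfolding J_def by (simp add: sum_product cnj_chi)
  also have "\<dots> = (\<Sum>y\<in>UNIV. \<Sum>x\<in>UNIV. chi (x * inverse y) * chi ((1 - x) * inverse (1 - y)))"
    by (subst sum.swap) (simp add: chi_mult mult_ac)
  also have "\<dots> = (\<Sum>y\<in>UNIV - {0,1}. \<Sum>x\<in>UNIV. chi (x * inverse y) * chi ((1 - x) * inverse (1 - y)))"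
    by (rule sum.mono_neutral_right) auto
  also have "\<dots> = (\<Sum>y\<in>UNIV - {0,1}. \<Sum>u\<in>UNIV. chi u * chi ((1 - u * y) / (1 - y)))"
  proof (rule sum.cong[OF refl])
    fix y :: 'a assume "y \<in> UNIV - {0, 1}"
    hence y: "y \<noteq> 0" by auto
    have "(\<Sum>x\<in>UNIV. chi (x * inverse y) * chi ((1 - x) * inverse (1 - y)))
        = (\<Sum>u\<in>UNIV. chi (y * u * inverse y) * chi ((1 - y * u) * inverse (1 - y)))"
      using sum_scale[OF y, of "\<lambda>x. chi (x * inverse y) * chi ((1 - x) * inverse (1 - y))"] by simp
    also have "\<dots> = (\<Sum>u\<in>UNIV. chi u * chi ((1 - u * y) / (1 - y)))"
      using y by (simp add: divide_inverse mult_ac)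
    finally show "(\<Sum>x\<in>UNIV. chi (x * inverse y) * chi ((1 - x) * inverse (1 - y))) = \<dots>" .
  qed
  also have "\<dots> = (\<Sum>u\<in>UNIV. chi u * T u)"
    unfolding T_def by (subst sum.swap) (simp add: sum_distrib_left)
  also have "\<dots> = chi 1 * T 1 + (\<Sum>u\<in>UNIV - {1}. chi u * T u)"
    by (simp add: sum.remove[of UNIV 1])
  also have "(\<Sum>u\<in>UNIV - {1}. chi u * T u) = (\<Sum>u\<in>UNIV - {1}. - chi u - chi u ^ 2)"
    by (rule sum.cong) (auto simp: T_ne1 algebra_simps power2_eq_square)
  also have "\<dots> = - (\<Sum>u\<in>UNIV - {1}. chi u) - (\<Sum>u\<in>UNIV - {1}. chi u ^ 2)"
    by (simp add: sum_subtractf sum_negf)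
  also have "(\<Sum>u\<in>UNIV - {1}. chi u ^ 2) = - 1"
    using sum_chi2 by (simp add: sum_diff1)
  finally show ?thesis by (simp add: T_1 sum_chi_but1)
qed

end


lemma sum9:
  fixes a1 a2 a3 b1 b2 b3 :: "'b \<Rightarrow> 'c::comm_ring"
  shows "(\<Sum>e\<in>A. (a1 e + a2 e + a3 e) * (b1 e + b2 e + b3 e)) =
    (\<Sum>e\<in>A. a1 e * b1 e) + (\<Sum>e\<in>A. a1 e * b2 e) + (\<Sum>e\<in>A. a1 e * b3 e) +
    (\<Sum>e\<in>A. a2 e * b1 e) + (\<Sum>e\<in>A. a2 e * b2 e) + (\<Sum>e\<in>A. a2 e * b3 e) +
    (\<Sum>e\<in>A. a3 e * b1 e) + (\<Sum>e\<in>A. a3 e * b2 e) + (\<Sum>e\<in>A. a3 e * b3 e)"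
  by (simp add: distrib_left distrib_right sum.distrib add_ac)

lemma sum_cmul: "(\<Sum>e\<in>A. (a * f e) * (b * h e)) = a * b * (\<Sum>e\<in>A. f e * h e)"
  for a b :: "'c::comm_ring"
  by (simp add: sum_distrib_left mult_ac)

lemma card_sum_if: "of_nat (card {e::'a::finite. P e}) = (\<Sum>e\<in>UNIV. if P e then 1 else (0::complex))"
  by (simp add: sum.If_cases Int_def)

context cyc begin

definition nu :: "'a \<Rightarrow> complex" where "nu x = (if x = 0 then 0 else 1)"
definition ind :: "'a \<Rightarrow> complex" where "ind x = (if x \<in> D then 1 else 0)"
abbreviation al :: complex where "al \<equiv> 1 - \<i>"

lemma ind_eq: "4 * ind x = 2 * nu x + al * chi x + cnj al * cnj (chi x)"
proof (cases "x = 0")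
  case True thus ?thesis by (simp add: ind_def nu_def zero_notin_D)
next
  case False
  consider "cls x = 0" | "cls x = 1" | "cls x = 2" | "cls x = 3" using cls_cases[of x] by auto
  thus ?thesis
  proof cases
    case 1 thus ?thesis using False by (simp add: ind_def nu_def chi_def D_iff complex_eq_iff)
  next
    case 2 thus ?thesis using False by (simp add: ind_def nu_def chi_def D_iff complex_eq_iff)
  next
    case 3 thus ?thesis using False by (simp add: ind_def nu_def chi_def D_iff complex_eq_iff power2_eq_square)
  next
    case 4 thus ?thesis using False by (simp add: ind_def nu_def chi_def D_iff complex_eq_iff power3_eq_cube)
  qed
qed

lemma sum_nu_left: "(\<Sum>e\<in>UNIV. nu e * f e) = (\<Sum>e\<in>UNIV. f e) - f (0::'a)"
proof -
  have "(\<Sum>e\<in>UNIV. nu e * f e) = nu 0 * f 0 + (\<Sum>e\<in>UNIV - {0}. nu e * f e)"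
    by (simp add: sum.remove[of UNIV 0])
  also have "(\<Sum>e\<in>UNIV - {0}. nu e * f e) = (\<Sum>e\<in>UNIV - {0}. f e)"
    by (rule sum.cong) (auto simp: nu_def)
  also have "\<dots> = (\<Sum>e\<in>UNIV. f e) - f 0" by (simp add: sum_diff1)
  finally show ?thesis by (simp add: nu_def)
qed

lemma sum_nu_right: "(\<Sum>e\<in>UNIV. f e * nu (e - d)) = (\<Sum>e\<in>UNIV. f e) - f (d::'a)"
proof -
  have "(\<Sum>e\<in>UNIV. f e * nu (e - d)) = f d * nu (d - d) + (\<Sum>e\<in>UNIV - {d}. f e * nu (e - d))"
    by (simp add: sum.remove[of UNIV d])
  also have "(\<Sum>e\<in>UNIV - {d}. f e * nu (e - d)) = (\<Sum>e\<in>UNIV - {d}. f e)"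
    by (rule sum.cong) (auto simp: nu_def)
  also have "\<dots> = (\<Sum>e\<in>UNIV. f e) - f d" by (simp add: sum_diff1)
  finally show ?thesis by (simp add: nu_def)
qed

lemma sum_shift_sub: "(\<Sum>e\<in>UNIV. f (e - d)) = (\<Sum>e\<in>UNIV. f (e::'a))"
  using sum_shift[of "f" "-d"] by simp

lemma sum_cnj_chi: "(\<Sum>x\<in>UNIV. cnj (chi x)) = 0"
  using sum_chi by (metis cnj_sum complex_cnj_zero)

lemma sum_nu: "(\<Sum>e\<in>UNIV. nu (e::'a)) = of_nat CARD('a) - 1"
  using sum_nu_left[of "\<lambda>_. 1"] by simp

lemma cnj_nu [simp]: "cnj (nu x) = nu x" by (simp add: nu_def)

context
  fixes d :: 'a assumes d: "d \<noteq> 0"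
begin

lemma S_nn: "(\<Sum>e\<in>UNIV. nu e * nu (e - d)) = of_nat CARD('a) - 2"
  using sum_nu_left[of "\<lambda>e. nu (e - d)"] sum_shift_sub[of nu d] sum_nu d by (simp add: nu_def)

lemma S_nc: "(\<Sum>e\<in>UNIV. nu e * chi (e - d)) = chi d"
  using sum_nu_left[of "\<lambda>e. chi (e - d)"] sum_shift_sub[of chi d] sum_chi by (simp add: chi_neg)

lemma S_nC: "(\<Sum>e\<in>UNIV. nu e * cnj (chi (e - d))) = cnj (chi d)"
  using sum_nu_left[of "\<lambda>e. cnj (chi (e - d))"] sum_shift_sub[of "\<lambda>x. cnj (chi x)" d] sum_cnj_chi
  by (simp add: chi_neg)

lemma S_cn: "(\<Sum>e\<in>UNIV. chi e * nu (e - d)) = - chi d"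
  using sum_nu_right[of chi d] sum_chi by simp

lemma S_Cn: "(\<Sum>e\<in>UNIV. cnj (chi e) * nu (e - d)) = - cnj (chi d)"
  using sum_nu_right[of "\<lambda>x. cnj (chi x)" d] sum_cnj_chi by simp

lemma S_cc: "(\<Sum>e\<in>UNIV. chi e * chi (e - d)) = - ((chi d)^2 * J)"
proof -
  have "(\<Sum>e\<in>UNIV. chi e * chi (e - d)) = (\<Sum>y\<in>UNIV. chi (d * y) * chi (d * y - d))"
    using sum_scale[OF d, of "\<lambda>e. chi e * chi (e - d)"] by simp
  also have "\<dots> = (\<Sum>y\<in>UNIV. chi d ^ 2 * (- (chi y * chi (1 - y))))"
  proof (rule sum.cong[OF refl])
    fix y
    have "d * y - d = d * (- (1 - y))" by (simp add: algebra_simps)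
    thus "chi (d * y) * chi (d * y - d) = chi d ^ 2 * (- (chi y * chi (1 - y)))"
      by (simp only: chi_mult chi_neg) (simp add: power2_eq_square)
  qed
  also have "\<dots> = - ((chi d)^2 * J)" unfolding J_def by (simp add: sum_distrib_left sum_negf)
  finally show ?thesis .
qed

lemma S_CC: "(\<Sum>e\<in>UNIV. cnj (chi e) * cnj (chi (e - d))) = - ((cnj (chi d))^2 * cnj J)"
proof -
  have "(\<Sum>e\<in>UNIV. cnj (chi e) * cnj (chi (e - d))) = cnj (\<Sum>e\<in>UNIV. chi e * chi (e - d))"
    by (simp add: cnj_sum)
  thus ?thesis by (simp add: S_cc)
qed

lemma S_cC: "(\<Sum>e\<in>UNIV. chi e * cnj (chi (e - d))) = - 1"
proof -
  have "(\<Sum>e\<in>UNIV. chi e * cnj (chi (e - d))) = (\<Sum>y\<in>UNIV. chi (d * y) * cnj (chi (d * y - d)))"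
    using sum_scale[OF d, of "\<lambda>e. chi e * cnj (chi (e - d))"] by simp
  also have "\<dots> = (\<Sum>y\<in>UNIV. (cnj (chi d) * chi d) * (- (chi y * cnj (chi (1 - y)))))"
  proof (rule sum.cong[OF refl])
    fix y
    have "d * y - d = d * (- (1 - y))" by (simp add: algebra_simps)
    thus "chi (d * y) * cnj (chi (d * y - d)) = (cnj (chi d) * chi d) * (- (chi y * cnj (chi (1 - y))))"
      by (simp only: chi_mult chi_neg complex_cnj_mult complex_cnj_minus) (simp add: algebra_simps)
  qed
  also have "\<dots> = - 1" using d by (simp add: cnj_chi_mult sum_negf K_eq)
  finally show ?thesis .
qed

lemma S_Cc: "(\<Sum>e\<in>UNIV. cnj (chi e) * chi (e - d)) = - 1"
proof -
  have "(\<Sum>e\<in>UNIV. cnj (chi e) * chi (e - d)) = cnj (\<Sum>e\<in>UNIV. chi e * cnj (chi (e - d)))"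
    by (simp add: cnj_sum)
  thus ?thesis by (simp add: S_cC)
qed

lemma N16: "16 * of_nat (Nc d) = 4 * of_nat CARD('a) - 12 + 2 * \<i> * (chi d)^2 * J - 2 * \<i> * (cnj (chi d))^2 * cnj J"
proof -
  have "of_nat (Nc d) = (\<Sum>e\<in>UNIV. ind e * ind (e - d))"
  proof -
    have "(\<Sum>e\<in>UNIV. ind e * ind (e - d)) = (\<Sum>e\<in>UNIV. if e \<in> D \<and> e - d \<in> D then 1 else 0)"
      by (rule sum.cong) (auto simp: ind_def)
    thus ?thesis unfolding Nc_def using card_sum_if[of "\<lambda>e. e \<in> D \<and> e - d \<in> D"] by simp
  qed
  hence "16 * of_nat (Nc d) = (\<Sum>e\<in>UNIV. (4 * ind e) * (4 * ind (e - d)))"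
    by (simp add: sum_distrib_left mult_ac)
  also have "\<dots> = (\<Sum>e\<in>UNIV. (2 * nu e + al * chi e + cnj al * cnj (chi e)) *
       (2 * nu (e - d) + al * chi (e - d) + cnj al * cnj (chi (e - d))))"
    by (simp only: ind_eq)
  also have "\<dots> = 2 * 2 * (\<Sum>e\<in>UNIV. nu e * nu (e - d)) + 2 * al * (\<Sum>e\<in>UNIV. nu e * chi (e - d))
     + 2 * cnj al * (\<Sum>e\<in>UNIV. nu e * cnj (chi (e - d)))
     + al * 2 * (\<Sum>e\<in>UNIV. chi e * nu (e - d)) + al * al * (\<Sum>e\<in>UNIV. chi e * chi (e - d))
     + al * cnj al * (\<Sum>e\<in>UNIV. chi e * cnj (chi (e - d)))
     + cnj al * 2 * (\<Sum>e\<in>UNIV. cnj (chi e) * nu (e - d)) + cnj al * al * (\<Sum>e\<in>UNIV. cnj (chi e) * chi (e - d))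
     + cnj al * cnj al * (\<Sum>e\<in>UNIV. cnj (chi e) * cnj (chi (e - d)))"
    by (simp only: sum9 sum_cmul)
  also have "\<dots> = 4 * of_nat CARD('a) - 12 + 2 * \<i> * (chi d)^2 * J - 2 * \<i> * (cnj (chi d))^2 * cnj J"
    unfolding S_nn S_nc S_nC S_cn S_cc S_cC S_Cn S_Cc S_CC
    by (simp add: algebra_simps complex_eq_iff)
  finally show ?thesis .
qed

end

end


definition re4 :: "nat \<Rightarrow> int" where
  "re4 k = (if k mod 4 = 0 then 1 else if k mod 4 = 2 then -1 else 0)"
definition im4 :: "nat \<Rightarrow> int" where
  "im4 k = (if k mod 4 = 1 then 1 else if k mod 4 = 3 then -1 else 0)"

lemma mod4_cases: "(k::nat) mod 4 = 0 \<or> k mod 4 = 1 \<or> k mod 4 = 2 \<or> k mod 4 = 3" by linarith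

lemma i_pow_re_im: "\<i> ^ k = of_int (re4 k) + \<i> * of_int (im4 k)"
proof -
  have "\<i> ^ k = \<i> ^ (k mod 4)" by (simp add: i_pow_mod4)
  moreover have "\<i> ^ (k mod 4) = of_int (re4 k) + \<i> * of_int (im4 k)"
    using mod4_cases[of k] unfolding re4_def im4_def by (auto simp: power3_eq_cube)
  ultimately show ?thesis by simp
qed

lemma mod4_pow:
  fixes z :: "'b::comm_ring_1"
  assumes "z ^ 4 = 1" shows "z ^ k = z ^ (k mod 4)"
proof -
  have "z ^ k = z ^ (4 * (k div 4) + k mod 4)" by simp
  also have "\<dots> = z ^ (k mod 4)" by (simp only: power_add power_mult assms) simp
  finally show ?thesis .
qed

context cyc begin

lemma iota3: "iota ^ 3 = - iota"
proof -
  have "iota ^ 3 = iota ^ 2 * iota" by (simp add: power3_eq_cube power2_eq_square)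
  thus ?thesis using iota_sq by simp
qed

lemma iota_pow_re_im: "iota ^ k = of_int (re4 k) + of_int (im4 k) * iota"
proof -
  have "iota ^ k = iota ^ (k mod 4)" by (rule mod4_pow[OF iota4])
  moreover have "iota ^ (k mod 4) = of_int (re4 k) + of_int (im4 k) * iota"
    using mod4_cases[of k] unfolding re4_def im4_def by (auto simp: iota_sq iota3)
  ultimately show ?thesis by simp
qed

lemma iota_pow3_re_im: "(iota ^ k) ^ 3 = of_int (re4 k) - of_int (im4 k) * iota"
proof -
  have i4: "iota ^ 4 = 1" by (rule iota4)
  have c: "iota ^ k = iota ^ (k mod 4)" by (rule mod4_pow[OF iota4])
  have i9: "iota ^ 9 = iota" 
  proof -
    have "iota ^ 9 = (iota ^ 4) ^ 2 * iota" by (simp flip: power_mult power_Suc2)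
    thus ?thesis using i4 by simp
  qed
  have i6: "iota ^ 6 = -1"
  proof -
    have "iota ^ 6 = iota ^ 4 * iota ^ 2" by (simp flip: power_add)
    thus ?thesis using i4 iota_sq by simp
  qed
  show ?thesis unfolding c
    using mod4_cases[of k] unfolding re4_def im4_def
    by (auto simp flip: power_mult simp: iota3 i9 i6)
qed

definition tt :: "'a \<Rightarrow> nat" where "tt y = cls y + cls (1 - y)"
definition ra :: "'a \<Rightarrow> int" where "ra y = (if y = 0 \<or> y = 1 then 0 else re4 (tt y))"
definition ib :: "'a \<Rightarrow> int" where "ib y = (if y = 0 \<or> y = 1 then 0 else im4 (tt y))"
definition AA :: int where "AA = (\<Sum>y\<in>UNIV. ra y)"
definition BB :: int where "BB = (\<Sum>y\<in>UNIV. ib y)"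

lemma J_term: "chi y * chi (1 - y) = of_int (ra y) + \<i> * of_int (ib y)"
proof (cases "y = 0 \<or> y = 1")
  case True thus ?thesis by (auto simp: ra_def ib_def)
next
  case False
  hence "chi y * chi (1 - y) = \<i> ^ tt y" by (simp add: chi_def tt_def power_add)
  thus ?thesis using False by (simp add: ra_def ib_def i_pow_re_im)
qed

lemma J_eq: "J = of_int AA + \<i> * of_int BB"
  unfolding J_def AA_def BB_def J_term by (simp add: sum.distrib sum_distrib_left)

lemma cnj_J: "cnj J = of_int AA - \<i> * of_int BB"
  unfolding J_eq by simp

lemma AB_sq: "AA ^ 2 + BB ^ 2 = int CARD('a)"
proof -
  have "J * cnj J = of_int (AA ^ 2 + BB ^ 2)"
    unfolding J_eq by (simp add: complex_eq_iff power2_eq_square)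
  hence "(of_int (AA ^ 2 + BB ^ 2) :: complex) = of_int (int CARD('a))" using JJ by simp
  thus ?thesis using of_int_eq_iff by blast
qed

lemma N_int0: assumes "d \<in> D" "cls d = 0" shows "4 * int (Nc d) = int CARD('a) - 3 - BB"
proof -
  have d: "d \<noteq> 0" using assms by (simp add: D_iff)
  have "chi d = 1" using assms d by (simp add: chi_def)
  hence "16 * (of_nat (Nc d) :: complex) = 4 * of_nat CARD('a) - 12 + 2 * \<i> * J - 2 * \<i> * cnj J"
    using N16[OF d] by simp
  also have "\<dots> = of_int (4 * (int CARD('a) - 3 - BB))"
    unfolding J_eq by (simp add: complex_eq_iff)
  finally have "(of_int (16 * int (Nc d)) :: complex) = of_int (4 * (int CARD('a) - 3 - BB))" by simp
  hence "16 * int (Nc d) = 4 * (int CARD('a) - 3 - BB)" using of_int_eq_iff by blast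
  thus ?thesis by simp
qed

lemma N_int1: assumes "d \<in> D" "cls d = 1" shows "4 * int (Nc d) = int CARD('a) - 3 + BB"
proof -
  have d: "d \<noteq> 0" using assms by (simp add: D_iff)
  have "chi d = \<i>" using assms d by (simp add: chi_def)
  hence "16 * (of_nat (Nc d) :: complex) = 4 * of_nat CARD('a) - 12 - 2 * \<i> * J + 2 * \<i> * cnj J"
    using N16[OF d] by (simp add: power2_eq_square)
  also have "\<dots> = of_int (4 * (int CARD('a) - 3 + BB))"
    unfolding J_eq by (simp add: complex_eq_iff)
  finally have "(of_int (16 * int (Nc d)) :: complex) = of_int (4 * (int CARD('a) - 3 + BB))" by simp
  hence "16 * int (Nc d) = 4 * (int CARD('a) - 3 + BB)" using of_int_eq_iff by blast
  thus ?thesis by simp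
qed

lemma NDR_iff_B: "nearly_doubly_regular (cyc_arc g) UNIV \<longleftrightarrow> BB = 2 \<or> BB = -2"
proof -
  have q: "int CARD('a) = 4 * int m + 1" using q_eq by simp
  have "(\<forall>d\<in>D. Nc d = m \<or> Nc d = m - 1) \<longleftrightarrow> BB = 2 \<or> BB = -2"
  proof
    assume H: "\<forall>d\<in>D. Nc d = m \<or> Nc d = m - 1"
    have "1 \<in> D" by (simp add: D_iff cls_one)
    hence a: "Nc 1 = m \<or> Nc 1 = m - 1" and a': "4 * int (Nc 1) = int CARD('a) - 3 - BB"
      using H N_int0[of 1] cls_one by auto
    have "g \<in> D" using g_nz by (simp add: D_iff cls_g)
    hence b: "Nc g = m \<or> Nc g = m - 1" and b': "4 * int (Nc g) = int CARD('a) - 3 + BB"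
      using H N_int1[of g] cls_g by auto
    show "BB = 2 \<or> BB = -2" using a b a' b' q m_pos by auto
  next
    assume B: "BB = 2 \<or> BB = -2"
    show "\<forall>d\<in>D. Nc d = m \<or> Nc d = m - 1"
    proof
      fix d assume d: "d \<in> D"
      hence "cls d = 0 \<or> cls d = 1" by (auto simp: D_iff)
      thus "Nc d = m \<or> Nc d = m - 1"
      proof
        assume "cls d = 0"
        from N_int0[OF d this] B q m_pos show ?thesis by auto
      next
        assume "cls d = 1"
        from N_int1[OF d this] B q m_pos show ?thesis by auto
      qed
    qed
  qed
  thus ?thesis using NDR_iff_N by simp
qed

end


lemma binom_term: "(x::'b::comm_ring_1) ^ a * (1 - x) ^ a = (\<Sum>k\<le>a. of_nat (a choose k) * (-1) ^ k * x ^ (a + k))"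
proof -
  have "(1 - x) ^ a = (- x + 1) ^ a" by simp
  also have "\<dots> = (\<Sum>k\<le>a. of_nat (a choose k) * (- x) ^ k * 1 ^ (a - k))" by (rule binomial_ring)
  finally have "x ^ a * (1 - x) ^ a = x ^ a * (\<Sum>k\<le>a. of_nat (a choose k) * (- x) ^ k * 1 ^ (a - k))"
    by simp
  also have "\<dots> = (\<Sum>k\<le>a. x ^ a * (of_nat (a choose k) * (- x) ^ k * 1 ^ (a - k)))"
    by (rule sum_distrib_left)
  also have "\<dots> = (\<Sum>k\<le>a. of_nat (a choose k) * (-1) ^ k * x ^ (a + k))"
  proof (rule sum.cong[OF refl])
    fix k
    have "(- x) ^ k = (-1) ^ k * x ^ k" by (rule power_minus)
    thus "x ^ a * (of_nat (a choose k) * (- x) ^ k * 1 ^ (a - k)) = of_nat (a choose k) * (-1) ^ k * x ^ (a + k)"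
      by (simp only: power_add power_one mult_1_right) (simp only: mult_ac)
  qed
  finally show ?thesis .
qed

context cyc begin

lemma ofnat_card: "(of_nat CARD('a) :: 'a) = 0"
  using CHAR_dvd_CARD[where 'a='a] of_nat_eq_0_iff_char_dvd[where 'a='a] by simp

definition psum :: "nat \<Rightarrow> 'a" where "psum j = (\<Sum>x\<in>UNIV. x ^ j)"

lemma psum_zero: assumes "\<not> n dvd j" shows "psum j = 0"
proof -
  have "psum j = (\<Sum>x\<in>UNIV. (g * x) ^ j)" unfolding psum_def using sum_scale[OF g_nz, of "\<lambda>x. x ^ j"] by simp
  also have "\<dots> = g ^ j * psum j" by (simp add: psum_def power_mult_distrib sum_distrib_left)
  finally have "(g ^ j - 1) * psum j = 0" by (simp add: algebra_simps)
  moreover have "g ^ j \<noteq> g ^ 0" unfolding g_pow_eq_iff using assms by (simp add: dvd_eq_mod_eq_0)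
  ultimately show ?thesis by simp
qed

lemma psum_n: assumes "j > 0" "n dvd j" shows "psum j = -1"
proof -
  obtain t where t: "j = n * t" using assms by blast
  have "psum j = (\<Sum>x\<in>UNIV. if (x::'a) = 0 then 0 else (1::'a))"
    unfolding psum_def
  proof (rule sum.cong[OF refl])
    fix x :: 'a show "x ^ j = (if x = 0 then 0 else 1)"
      using assms fermat[of x] by (auto simp: t power_mult)
  qed
  also have "\<dots> = of_nat (card (UNIV - {0::'a}))" by (simp add: sum.If_cases Diff_eq Int_def Compl_eq)
  also have "card (UNIV - {0::'a}) = CARD('a) - 1" by (simp add: card_Diff_subset)
  also have "(of_nat (CARD('a) - 1) :: 'a) = of_nat CARD('a) - 1" using q_ge by (simp add: of_nat_diff)
  finally show ?thesis by (simp add: ofnat_card)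
qed

lemma binom_expand: "(\<Sum>x\<in>UNIV. (x::'a) ^ a * (1 - x) ^ a) =
   (\<Sum>k\<le>a. of_nat (a choose k) * (-1) ^ k * psum (a + k))"
proof -
  have "(\<Sum>x\<in>UNIV. (x::'a) ^ a * (1 - x) ^ a) = (\<Sum>x\<in>UNIV. \<Sum>k\<le>a. of_nat (a choose k) * (-1) ^ k * x ^ (a + k))"
    by (rule sum.cong[OF refl]) (rule binom_term)
  also have "\<dots> = (\<Sum>k\<le>a. of_nat (a choose k) * (-1) ^ k * psum (a + k))"
    unfolding psum_def by (subst sum.swap) (simp only: sum_distrib_left)
  finally show ?thesis .
qed

lemma sum_m: "(\<Sum>x\<in>UNIV. (x::'a) ^ m * (1 - x) ^ m) = 0"
proof -
  have "psum (m + k) = 0" if "k \<le> m" for k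
  proof (rule psum_zero)
    show "\<not> n dvd m + k"
    proof
      assume "n dvd m + k"
      moreover have "0 < m + k" "m + k < n" using that m_pos n_eq by auto
      ultimately show False using dvd_imp_le[of n "m + k"] by linarith
    qed
  qed
  thus ?thesis unfolding binom_expand by simp
qed

lemma sum_3m: "(\<Sum>x\<in>UNIV. (x::'a) ^ (3 * m) * (1 - x) ^ (3 * m)) = of_nat ((3 * m) choose m)"
proof -
  have ps: "psum (3 * m + k) = (if k = m then -1 else 0)" if "k \<le> 3 * m" for k
  proof (cases "k = m")
    case True thus ?thesis using psum_n[of "3 * m + k"] m_pos by (simp add: n_eq)
  next
    case False
    have "\<not> n dvd 3 * m + k"
    proof
      assume "n dvd 3 * m + k"
      then obtain t where t: "3 * m + k = 4 * m * t" by (auto simp: n_eq)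
      have "t \<noteq> 0" using t m_pos by (intro notI) simp
      moreover have "t < 2"
      proof (rule ccontr)
        assume "\<not> t < 2"
        hence "4 * m * t \<ge> 4 * m * 2" by simp
        thus False using t that m_pos by linarith
      qed
      ultimately have "t = 1" by simp
      thus False using t False by simp
    qed
    thus ?thesis using False psum_zero by simp
  qed
  have "(\<Sum>x\<in>UNIV. (x::'a) ^ (3 * m) * (1 - x) ^ (3 * m)) =
        (\<Sum>k\<le>3 * m. if k = m then - (of_nat ((3 * m) choose k) * (-1) ^ k) else 0)"
    unfolding binom_expand by (rule sum.cong) (auto simp: ps)
  also have "\<dots> = - (of_nat ((3 * m) choose m) * (-1) ^ m)" by (simp add: sum.delta)
  also have "(-1::'a) ^ m = -1" using m_odd by simp
  finally show ?thesis by simp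
qed

lemma red_J: "of_int AA + of_int BB * iota = 0"
proof -
  have "(\<Sum>x\<in>UNIV. (x::'a) ^ m * (1 - x) ^ m) = (\<Sum>y\<in>UNIV. of_int (ra y) + of_int (ib y) * iota)"
  proof (rule sum.cong[OF refl])
    fix y :: 'a
    show "y ^ m * (1 - y) ^ m = of_int (ra y) + of_int (ib y) * iota"
    proof (cases "y = 0 \<or> y = 1")
      case True thus ?thesis using m_pos by (auto simp: ra_def ib_def)
    next
      case False
      hence "y ^ m * (1 - y) ^ m = iota ^ tt y" by (simp add: pow_m tt_def power_add)
      thus ?thesis using False by (simp add: ra_def ib_def iota_pow_re_im)
    qed
  qed
  also have "\<dots> = of_int AA + of_int BB * iota"
    unfolding AA_def BB_def by (simp add: sum.distrib sum_distrib_right)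
  finally show ?thesis using sum_m by simp
qed

lemma red_J3: "of_int AA - of_int BB * iota = of_nat ((3 * m) choose m)"
proof -
  have "(\<Sum>x\<in>UNIV. (x::'a) ^ (3 * m) * (1 - x) ^ (3 * m)) = (\<Sum>y\<in>UNIV. of_int (ra y) - of_int (ib y) * iota)"
  proof (rule sum.cong[OF refl])
    fix y :: 'a
    show "y ^ (3 * m) * (1 - y) ^ (3 * m) = of_int (ra y) - of_int (ib y) * iota"
    proof (cases "y = 0 \<or> y = 1")
      case True thus ?thesis using m_pos by (auto simp: ra_def ib_def)
    next
      case False
      have e3: "y ^ (3 * m) * (1 - y) ^ (3 * m) = (y ^ m * (1 - y) ^ m) ^ 3"
        by (simp only: power_mult_distrib mult.commute[of 3 m] power_mult)
      hence "y ^ (3 * m) * (1 - y) ^ (3 * m) = (iota ^ tt y) ^ 3"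
        using False by (simp add: pow_m tt_def power_add)
      thus ?thesis using False by (simp add: ra_def ib_def iota_pow3_re_im)
    qed
  qed
  also have "\<dots> = of_int AA - of_int BB * iota"
    unfolding AA_def BB_def by (simp add: sum_subtractf sum_distrib_right)
  finally show ?thesis using sum_3m by simp
qed

end


lemma final_int:
  fixes A B s q :: int and p k :: nat
  assumes AB: "A^2 + B^2 = q" and sq: "s^2 + 4 = q" and Be: "even B" and so: "odd s"
    and qp: "q = int p ^ k" and pr: "prime p"
    and nX: "\<not> int p dvd (A*s - 2*B)" and nY: "\<not> int p dvd (2*A + B*s)"
  shows "B = 2 \<or> B = -2"
proof -
  have pri: "prime (int p)" using pr by simp
  have Ao: "odd A"
  proof
    assume "even A"
    hence "even (A^2 + B^2)" using Be by simp
    moreover have "odd (s^2 + 4)" using so by simp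
    ultimately show False using AB sq by simp
  qed
  have a2: "A^2 = q - B^2" using AB by simp
  have s2: "s^2 = q - 4" using sq by simp
  have XX: "(A*s + 2*B) * (A*s - 2*B) = q * (q - 4 - B^2)"
  proof -
    have "(A*s + 2*B) * (A*s - 2*B) = A^2 * s^2 - 4 * B^2" by (simp add: algebra_simps power2_eq_square)
    also have "\<dots> = (q - B^2) * (q - 4) - 4 * B^2" by (simp only: a2 s2)
    also have "\<dots> = q * (q - 4 - B^2)" by (simp add: algebra_simps)
    finally show ?thesis .
  qed
  have YY: "(2*A - B*s) * (2*A + B*s) = q * (4 - B^2)"
  proof -
    have "(2*A - B*s) * (2*A + B*s) = 4 * A^2 - B^2 * s^2" by (simp add: algebra_simps power2_eq_square)
    also have "\<dots> = 4 * (q - B^2) - B^2 * (q - 4)" by (simp only: a2 s2)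
    also have "\<dots> = q * (4 - B^2)" by (simp add: algebra_simps)
    finally show ?thesis .
  qed
  have cX: "coprime (A*s - 2*B) q" unfolding qp by (rule prime_imp_power_coprime[OF pri nX])
  have cY: "coprime (2*A + B*s) q" unfolding qp by (rule prime_imp_power_coprime[OF pri nY])
  have "q dvd (A*s + 2*B) * (A*s - 2*B)" unfolding XX by simp
  hence dX: "q dvd A*s + 2*B" using cX by (metis coprime_commute coprime_dvd_mult_left_iff)
  have "q dvd (2*A - B*s) * (2*A + B*s)" unfolding YY by simp
  hence dY: "q dvd 2*A - B*s" using cY by (metis coprime_commute coprime_dvd_mult_left_iff)
  obtain x where x: "A*s + 2*B = q * x" using dX by blast
  obtain y where y: "2*A - B*s = q * y" using dY by blast
  have "(A*s + 2*B)^2 + (2*A - B*s)^2 = (A^2 + B^2) * (s^2 + 4)"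
    by (simp add: algebra_simps power2_eq_square)
  also have "\<dots> = q^2" using AB sq by (simp add: power2_eq_square)
  finally have "q^2 * (x^2 + y^2) = q^2 * 1" unfolding x y by (simp add: algebra_simps power2_eq_square)
  moreover have "q \<noteq> 0"
  proof -
    have "s^2 \<ge> 0" by simp
    thus ?thesis using sq by linarith
  qed
  ultimately have xy: "x^2 + y^2 = 1" by simp
  have "x = 0 \<or> y = 0"
  proof (rule ccontr)
    assume "\<not> (x = 0 \<or> y = 0)"
    have sq1: "z^2 \<ge> 1" if "z \<noteq> 0" for z :: int
    proof -
      have "0 < z * z" using that by (simp add: zero_less_mult_iff linorder_neq_iff) blast
      thus ?thesis by (simp add: power2_eq_square)
    qed
    hence "x^2 \<ge> 1" "y^2 \<ge> 1" using \<open>\<not> (x = 0 \<or> y = 0)\<close> by auto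
    thus False using xy by simp
  qed
  thus ?thesis
  proof
    assume "x = 0"
    hence "A*s = - 2*B" using x by simp
    moreover have "odd (A*s)" using Ao so by simp
    ultimately show ?thesis by simp
  next
    assume "y = 0"
    hence e: "2*A = B*s" using y by simp
    have "4 * q = 4 * A^2 + 4 * B^2" using AB by simp
    also have "4 * A^2 = B^2 * s^2" using e by (metis power2_eq_square mult.commute power_mult_distrib mult.assoc numeral_Bit0 mult_2 power2_eq_square)
    also have "B^2 * s^2 + 4 * B^2 = B^2 * q" unfolding sq[symmetric] by (simp add: algebra_simps)
    finally have "B^2 = 4" using \<open>q \<noteq> 0\<close> by (simp add: mult.commute)
    hence "B^2 = 2^2" by simp
    thus ?thesis using power2_eq_iff by blast
  qed
qed


lemma binom_R:
  assumes pr: "prime CHAR('a::comm_ring_1)" and c: "3 * c < CHAR('a)"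
  shows "(of_nat ((3 * c * (\<Sum>j<k. CHAR('a) ^ j)) choose (c * (\<Sum>j<k. CHAR('a) ^ j))) :: 'a)
         = of_nat ((3 * c) choose c) ^ k"
proof (induction k)
  case 0 thus ?case by simp
next
  case (Suc k)
  define R where "R = (\<Sum>j<k. CHAR('a) ^ j)"
  have RS: "(\<Sum>j<Suc k. CHAR('a) ^ j) = 1 + CHAR('a) * R"
    unfolding R_def by (simp only: sum.lessThan_Suc_shift power_0 power_Suc sum_distrib_left)
  have e1: "3 * c * (\<Sum>j<Suc k. CHAR('a) ^ j) = 3 * c + CHAR('a) * (3 * c * R)"
    unfolding RS by (simp add: algebra_simps)
  have e2: "c * (\<Sum>j<Suc k. CHAR('a) ^ j) = c + CHAR('a) * (c * R)"
    unfolding RS by (simp add: algebra_simps)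
  have "(of_nat ((3 * c * (\<Sum>j<Suc k. CHAR('a) ^ j)) choose (c * (\<Sum>j<Suc k. CHAR('a) ^ j))) :: 'a)
     = of_nat ((3 * c) choose c) * of_nat ((3 * c * R) choose (c * R))"
    unfolding e1 e2 using lucas_step[OF pr, of "3 * c" c "3 * c * R" "c * R"] c by simp
  thus ?case using Suc.IH unfolding R_def by simp
qed

lemma geom_nat: "(p - 1) * (\<Sum>j<k. p ^ j) = p ^ k - (1::nat)" if "p \<ge> 1"
proof (induction k)
  case (Suc k)
  have "(p - 1) * (\<Sum>j<Suc k. p ^ j) = (p - 1) * (\<Sum>j<k. p ^ j) + (p - 1) * p ^ k" by (simp add: algebra_simps)
  also have "\<dots> = p ^ k - 1 + (p - 1) * p ^ k" using Suc by simp
  also have "\<dots> = p ^ Suc k - 1"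
  proof -
    have "p ^ k \<ge> 1" using that by simp
    thus ?thesis using that by (simp add: algebra_simps diff_mult_distrib)
  qed
  finally show ?case .
qed simp

lemma odd_sq_mod8: "odd (p::nat) \<Longrightarrow> p ^ 2 mod 8 = 1"
proof -
  assume "odd p"
  then obtain t where "p = 2 * t + 1" by (blast elim: oddE)
  hence "p ^ 2 = 4 * (t * (t + 1)) + 1" by (simp add: power2_eq_square algebra_simps)
  moreover have "even (t * (t + 1))" by simp
  then obtain u where "t * (t + 1) = 2 * u" by blast
  ultimately have "p ^ 2 = 8 * u + 1" by simp
  thus ?thesis by simp
qed

lemma pow_mod8_1: "(x::nat) mod 8 = 1 \<Longrightarrow> x ^ j mod 8 = 1"
proof (induction j)
  case (Suc j)
  have "x ^ Suc j mod 8 = (x mod 8) * (x ^ j mod 8) mod 8" by (simp add: mod_mult_eq)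
  thus ?case using Suc by simp
qed simp

lemma p_mod4:
  fixes p k :: nat
  assumes "p ^ k mod 8 = 5" shows "p mod 4 = 1"
proof -
  have "odd (p ^ k)" using assms by presburger
  moreover have "k \<noteq> 0" using assms by (intro notI) simp
  ultimately have op: "odd p" by (simp add: even_power)
  have p2: "(p ^ 2) ^ j mod 8 = 1" for j by (rule pow_mod8_1[OF odd_sq_mod8[OF op]])
  consider j where "k = 2 * j" | j where "k = 2 * j + 1" by (metis oddE evenE)
  thus ?thesis
  proof cases
    case 1
    have "p ^ k = (p ^ 2) ^ j" unfolding 1 by (simp only: power_mult)
    thus ?thesis using p2[of j] assms by simp
  next
    case 2
    have "p ^ k = (p ^ 2) ^ j * p" unfolding 2 by (simp only: power_add power_mult power_one_right)
    hence "p ^ k mod 8 = ((p ^ 2) ^ j mod 8) * (p mod 8) mod 8" by (simp only: mod_mult_eq)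
    hence "p mod 8 = 5" using assms p2[of j] by simp
    thus ?thesis by presburger
  qed
qed



context cyc begin

lemma beta_nz: "(of_nat ((3 * m) choose m) :: 'a) \<noteq> 0"
proof -
  define p where "p = CHAR('a)"
  have pr: "prime p" unfolding p_def by (rule CHAR_prime_ff)
  obtain k where qk: "CARD('a) = p ^ k" unfolding p_def using card_power_CHAR by blast
  have "p ^ k mod 8 = 5" using q8 qk by simp
  hence p4: "p mod 4 = 1" by (rule p_mod4)
  define c where "c = (p - 1) div 4"
  have pc: "p - 1 = 4 * c" using p4 unfolding c_def by presburger
  have p1: "p \<ge> 1" using pr prime_ge_1_nat by blast
  have c3: "3 * c < p" using pc p1 by linarith
  define R where "R = (\<Sum>j<k. p ^ j)"
  have "(p - 1) * R = p ^ k - 1" unfolding R_def by (rule geom_nat[OF p1])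
  hence "4 * c * R = 4 * m" using pc qk q_eq by simp
  hence mR: "m = c * R" by simp
  have "(of_nat ((3 * m) choose m) :: 'a) = of_nat ((3 * c) choose c) ^ k"
    using binom_R[where 'a='a, of c k] pr c3 unfolding p_def[symmetric] R_def[symmetric] mR
    by (simp add: mult.assoc)
  moreover have "(of_nat ((3 * c) choose c) :: 'a) \<noteq> 0"
  proof
    assume "(of_nat ((3 * c) choose c) :: 'a) = 0"
    hence "p dvd ((3 * c) choose c)" unfolding p_def by (simp add: of_nat_eq_0_iff_char_dvd)
    moreover have "fact c * fact (3 * c - c) * ((3 * c) choose c) = (fact (3 * c) :: nat)"
      by (rule binomial_fact_lemma) simp
    ultimately have "p dvd (fact (3 * c) :: nat)" by (metis dvd_mult)
    hence "p \<le> 3 * c" using prime_dvd_fact_iff[OF pr] by simp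
    thus False using c3 by simp
  qed
  ultimately show ?thesis by simp
qed

lemma BB_even: "even BB"
proof -
  have "1 \<in> D" by (simp add: D_iff cls_one)
  from N_int0[OF this cls_one] have "BB = int CARD('a) - 3 - 4 * int (Nc 1)" by simp
  also have "\<dots> = 2 * (2 * int m - 1 - 2 * int (Nc 1))" using q_eq by simp
  finally show ?thesis by simp
qed

lemma main: "nearly_doubly_regular (cyc_arc g) UNIV \<longleftrightarrow> (\<exists>s::int. odd s \<and> int CARD('a) = s ^ 2 + 4)"
proof
  assume "nearly_doubly_regular (cyc_arc g) UNIV"
  hence B: "BB = 2 \<or> BB = -2" using NDR_iff_B by simp
  hence q: "int CARD('a) = AA ^ 2 + 4" using AB_sq by auto
  have "odd (int CARD('a))" using q_eq by simp
  hence "odd AA" using q by auto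
  thus "\<exists>s::int. odd s \<and> int CARD('a) = s ^ 2 + 4" using q by blast
next
  assume "\<exists>s::int. odd s \<and> int CARD('a) = s ^ 2 + 4"
  then obtain s0 :: int where s0: "odd s0" "int CARD('a) = s0 ^ 2 + 4" by blast
  define p where "p = CHAR('a)"
  have pr: "prime p" unfolding p_def by (rule CHAR_prime_ff)
  obtain k where qk: "CARD('a) = p ^ k" unfolding p_def using card_power_CHAR by blast
  have "p ^ k mod 8 = 5" using q8 qk by simp
  hence p4: "p mod 4 = 1" by (rule p_mod4)
  have four: "(4::'a) \<noteq> 0"
  proof
    assume "(4::'a) = 0"
    hence "(of_nat 4 :: 'a) = 0" by simp
    hence "p dvd 4" unfolding p_def by (simp only: of_nat_eq_0_iff_char_dvd)
    hence "p \<le> 4" by (rule dvd_imp_le) simp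
    moreover have "p \<noteq> 1" using pr by auto
    ultimately have "p = 2 \<or> p = 3 \<or> p = 4 \<or> p = 0" using p4 by linarith
    thus False using p4 pr by auto
  qed
  have ofq: "(of_int (int CARD('a)) :: 'a) = 0" using ofnat_card by simp
  have io: "iota \<noteq> 0" using iota_sq by (intro notI) simp
  obtain s :: int where s: "odd s" "int CARD('a) = s ^ 2 + 4" "iota * of_int s = (2::'a)"
  proof -
    define S where "S = (of_int s0 :: 'a)"
    have "S ^ 2 + 4 = 0" using ofq s0(2) unfolding S_def by (metis of_int_add of_int_numeral of_int_power)
    hence "(2 - iota * S) * (2 + iota * S) = 0"
      using iota_sq by (simp add: algebra_simps power2_eq_square)
    hence "2 - iota * S = 0 \<or> 2 + iota * S = 0" by simp
    thus ?thesis
    proof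
      assume "2 - iota * S = 0"
      thus ?thesis using that[of s0] s0 unfolding S_def by simp
    next
      assume "2 + iota * S = 0"
      hence "iota * S = - 2" by (simp add: add_eq_0_iff)
      hence "iota * of_int (- s0) = (2::'a)" unfolding S_def by simp
      moreover have "odd (- s0)" "int CARD('a) = (- s0) ^ 2 + 4" using s0 by simp_all
      ultimately show ?thesis using that[of "- s0"] by blast
    qed
  qed
  define a b \<sigma> where "a = (of_int AA :: 'a)" and "b = (of_int BB :: 'a)" and "\<sigma> = (of_int s :: 'a)"
  have ab: "a = - b * iota" using red_J unfolding a_def b_def by (simp add: eq_neg_iff_add_eq_0)
  have bnz: "b \<noteq> 0"
  proof
    assume "b = 0"
    hence "a - b * iota = 0" using ab by simp
    thus False using red_J3 beta_nz unfolding a_def b_def by simp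
  qed
  have sig: "\<sigma> = - 2 * iota"
  proof -
    have "iota * (iota * \<sigma>) = iota * 2" using s(3) unfolding \<sigma>_def by simp
    hence "iota ^ 2 * \<sigma> = 2 * iota" by (simp add: power2_eq_square mult_ac)
    hence "- \<sigma> = 2 * iota" using iota_sq by simp
    hence "- (- \<sigma>) = - (2 * iota)" by (rule arg_cong)
    thus ?thesis by simp
  qed
  have X: "(of_int (AA * s - 2 * BB) :: 'a) = - 4 * b"
  proof -
    have "(of_int (AA * s - 2 * BB) :: 'a) = a * \<sigma> - 2 * b" unfolding a_def b_def \<sigma>_def by simp
    also have "\<dots> = 2 * b * iota ^ 2 - 2 * b" unfolding ab sig by (simp add: power2_eq_square mult_ac)
    also have "\<dots> = - 4 * b" using iota_sq by simp
    finally show ?thesis .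
  qed
  have Y: "(of_int (2 * AA + BB * s) :: 'a) = - 4 * b * iota"
  proof -
    have "(of_int (2 * AA + BB * s) :: 'a) = 2 * a + b * \<sigma>" unfolding a_def b_def \<sigma>_def by simp
    also have "\<dots> = - 4 * b * iota" unfolding ab sig by (simp add: algebra_simps)
    finally show ?thesis .
  qed
  have nX: "\<not> int p dvd (AA * s - 2 * BB)"
  proof
    assume "int p dvd (AA * s - 2 * BB)"
    hence "(of_int (AA * s - 2 * BB) :: 'a) = 0" unfolding p_def by (simp only: of_int_eq_0_iff_char_dvd)
    thus False using X four bnz by simp
  qed
  have nY: "\<not> int p dvd (2 * AA + BB * s)"
  proof
    assume "int p dvd (2 * AA + BB * s)"
    hence "(of_int (2 * AA + BB * s) :: 'a) = 0" unfolding p_def by (simp only: of_int_eq_0_iff_char_dvd)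
    thus False using Y four bnz io by simp
  qed
  have "BB = 2 \<or> BB = -2"
    by (rule final_int[OF AB_sq s(2)[symmetric] BB_even s(1) _ pr nX nY]) (simp add: qk)
  thus "nearly_doubly_regular (cyc_arc g) UNIV" using NDR_iff_B by simp
qed

end


theorem theorem1:
  fixes g :: "'a::{finite,field}"
  assumes "CARD('a) mod 8 = 5"
    and "primitive_element g"
  shows "nearly_doubly_regular (cyc_arc g) (UNIV :: 'a set) \<longleftrightarrow>
         (\<exists>s::int. odd s \<and> int CARD('a) = s ^ 2 + 4)"
proof -
  interpret cyc g using assms by unfold_locales
  show ?thesis by (rule main)
qed

end
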